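(* Let $b\ge 0$ and $h\ge 2b+1$ be integers. Let $K$ be the complete directed graph (without self-loops) on a set $H$ of $h$ vertices, i.e. $(i,j)$ is an edge for all distinct $i,j\in H$. Let $R$ be any graph obtained from $K$ by deleting, for each vertex, an arbitrary set of $b$ of its incoming edges. Then $R$ contains a source component, i.e. a vertex $v_0\in H$ having a directed path in $R$ to every other vertex of $H$.
   Context: In the paper's setting, $H$ is the set of honest nodes among $m=h+b$ nodes with $b<\frac{1}{3}m$ (so $h\ge 2b+1$), and a graph $R$ as in the claim is called a reduced graph (of the complete graph on all $m$ nodes, after deleting the $b$ Byzantine nodes with their edges). *)

theory Defs
  imports Main
begin

definition complete_digraph :: "'a set \<Rightarrow> ('a \<times> 'a) set" where
  "complete_digraph H = {(i, j). i \<in> H \<and> j \<in> H \<and> i \<noteq> j}"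

definition reduced_graph :: "'a set \<Rightarrow> nat \<Rightarrow> ('a \<times> 'a) set \<Rightarrow> bool" where
  "reduced_graph H b R \<longleftrightarrow> R \<subseteq> complete_digraph H \<and>
     (\<forall>j\<in>H. card {i. (i, j) \<in> complete_digraph H \<and> (i, j) \<notin> R} = b)"

end

theory Submission
  imports Defs
begin

lemma anc_card:
  assumes fin: "finite H" and red: "reduced_graph H b R" and u: "u \<in> H"
  shows "card H \<le> card {x\<in>H. (x,u) \<in> R\<^sup>*} + b"
proof -
  let ?D = "{i. (i, u) \<in> complete_digraph H \<and> (i, u) \<notin> R}"
  let ?N = "{i\<in>H. (i,u) \<in> R}"
  have cD: "card ?D = b" using red u unfolding reduced_graph_def by blast
  have sub: "H - {u} \<subseteq> ?N \<union> ?D" using u by (auto simp: complete_digraph_def)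
  have fD: "finite ?D" using fin by (rule rev_finite_subset) (auto simp: complete_digraph_def)
  have fN: "finite ?N" using fin by simp
  have "card (H - {u}) \<le> card (?N \<union> ?D)" using sub fN fD by (intro card_mono) auto
  also have "\<dots> \<le> card ?N + card ?D" by (rule card_Un_le)
  finally have h1: "card H - 1 \<le> card ?N + b" using cD u fin by simp
  have uN: "u \<notin> ?N" using red unfolding reduced_graph_def complete_digraph_def by auto
  have "insert u ?N \<subseteq> {x\<in>H. (x,u) \<in> R\<^sup>*}" using u by auto
  hence "card (insert u ?N) \<le> card {x\<in>H. (x,u) \<in> R\<^sup>*}" using fin by (intro card_mono) auto
  hence "card ?N + 1 \<le> card {x\<in>H. (x,u) \<in> R\<^sup>*}" using uN fN by simp
  moreover have "card H \<ge> 1" using u fin by (metis One_nat_def Suc_leI card_gt_0_iff empty_iff)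
  ultimately show ?thesis using h1 by linarith
qed

lemma common_anc:
  assumes fin: "finite H" and h: "card H \<ge> 2 * b + 1" and red: "reduced_graph H b R"
    and u: "u \<in> H" and w: "w \<in> H"
  shows "\<exists>c\<in>H. (c,u) \<in> R\<^sup>* \<and> (c,w) \<in> R\<^sup>*"
proof -
  let ?A = "{x\<in>H. (x,u) \<in> R\<^sup>*}" and ?B = "{x\<in>H. (x,w) \<in> R\<^sup>*}"
  have a: "card H \<le> card ?A + b" by (rule anc_card[OF fin red u])
  have b: "card H \<le> card ?B + b" by (rule anc_card[OF fin red w])
  have fA: "finite ?A" "finite ?B" using fin by auto
  have "card (?A \<union> ?B) + card (?A \<inter> ?B) = card ?A + card ?B" using card_Un_Int[OF fA] by simp
  moreover have "card (?A \<union> ?B) \<le> card H" using fin by (intro card_mono) auto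
  ultimately have "card (?A \<inter> ?B) \<ge> 1" using a b h by linarith
  hence "?A \<inter> ?B \<noteq> {}" by auto
  thus ?thesis by blast
qed

theorem lemma1:
  fixes H :: "'a set" and b h :: nat and R :: "('a \<times> 'a) set"
  assumes "finite H" and "card H = h" and "h \<ge> 2 * b + 1"
    and "reduced_graph H b R"
  shows "\<exists>v0\<in>H. \<forall>v\<in>H. v \<noteq> v0 \<longrightarrow> (v0, v) \<in> R\<^sup>+"
proof -
  define desc where "desc v = {u\<in>H. (v,u) \<in> R\<^sup>*}" for v
  have ne: "H \<noteq> {}" using assms(2,3) by auto
  let ?S = "(\<lambda>v. card (desc v)) ` H"
  have "Max ?S \<in> ?S" using assms(1) ne by (intro Max_in) auto
  then obtain v0 where v0: "v0 \<in> H" "card (desc v0) = Max ?S" by auto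
  have mx: "card (desc c) \<le> card (desc v0)" if "c \<in> H" for c
    using v0(2) that assms(1) by simp
  have "v \<in> desc v0" if v: "v \<in> H" for v
  proof (rule ccontr)
    assume nv: "v \<notin> desc v0"
    obtain c where c: "c \<in> H" "(c,v0) \<in> R\<^sup>*" "(c,v) \<in> R\<^sup>*"
      using common_anc[OF assms(1) _ assms(4) v0(1) v] assms(2,3) by auto
    have "desc v0 \<subseteq> desc c" using c(2) unfolding desc_def by (auto intro: rtrancl_trans)
    moreover have "v \<in> desc c" using c v unfolding desc_def by auto
    ultimately have "desc v0 \<subset> desc c" using nv by auto
    moreover have "finite (desc c)" unfolding desc_def using assms(1) by auto
    ultimately have "card (desc v0) < card (desc c)" by (rule psubset_card_mono[rotated])
    thus False using mx[OF c(1)] by simp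
  qed
  hence "\<forall>v\<in>H. v \<noteq> v0 \<longrightarrow> (v0, v) \<in> R\<^sup>+"
    unfolding desc_def by (auto simp: rtrancl_eq_or_trancl)
  thus ?thesis using v0(1) by blast
qed

end
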